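(* Let $k\ge2$, let $\mathcal{F}\subset 2^{[n]}$ be weakly $k$-cross-free, and let $0\le a\le b\le\log n$ be reals. For each integer $i$ with $a<i\le b$ let $\Gamma_i$ be a collection of pairwise disjoint nonempty chains contained in $\mathcal{F}_i$ such that $\{\max\mathcal{C}:\mathcal{C}\in\Gamma_i\}$ is an antichain, and let $\Gamma_{a,b}=\bigcup_{a<i\le b}\Gamma_i$. For each $\mathcal{C}\in\Gamma_{a,b}$ fix a set $Y(\mathcal{C})$ as described in the context, and for $y\in[n]$ let $d(y)$ be the number of chains $\mathcal{C}\in\Gamma_{a,b}$ with $y\in Y(\mathcal{C})$ and $g(y)$ the number of $k$-tuples of chains in $\Gamma_{a,b}$ that are good for $y$. Then for every $y\in[n]$, $$g(y)\geq \binom{d(y)/(k-1)^{2}}{k}.$$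
   Context: Sets $A,B$ are weakly crossing if $A\setminus B$, $B\setminus A$, $A\cap B$ are all non-empty; a family is weakly $k$-cross-free if it contains no $k$ pairwise weakly crossing sets. $\mathcal{F}_i=\{X\in\mathcal{F}:2^i<|X|\le 2^{i+1}\}$. A chain $\mathcal{C}$ is written $\mathcal{C}(1)\subsetneq\dots\subsetneq\mathcal{C}(l)$, $\min\mathcal{C}=\mathcal{C}(1)$, $\max\mathcal{C}=\mathcal{C}(l)$. $Y(\mathcal{C})$ is a set obtained by choosing one element of $\mathcal{C}(1)$ and one element of each difference $\mathcal{C}(j+1)\setminus\mathcal{C}(j)$, $j=1,\dots,l-1$ (so $|Y(\mathcal{C})|=|\mathcal{C}|$). A $k$-tuple $(\mathcal{C}_1,\dots,\mathcal{C}_k)$ of chains in $\Gamma_{a,b}$ with $\mathcal{C}_l\in\Gamma_{j_l}$ for some $j_1<\dots<j_k$ is good for $y$ if (i) $y\in Y(\mathcal{C}_l)$ for all $l\in[k]$, and (ii) letting $C_l$ be the smallest set of $\mathcal{C}_l$ containing $y$, we have $C_1\subset\dots\subset C_k$. Extended binomial coefficient: for real $x$, $\binom{x}{k}=x(x-1)\cdots(x-k+1)/k!$ if $x\ge k-1$ and $0$ otherwise. *)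

theory Defs
  imports Complex_Main
begin

definition weakly_crossing :: "'a set \<Rightarrow> 'a set \<Rightarrow> bool" where
  "weakly_crossing A B \<longleftrightarrow> A - B \<noteq> {} \<and> B - A \<noteq> {} \<and> A \<inter> B \<noteq> {}"

definition weakly_k_cross_free :: "nat \<Rightarrow> 'a set set \<Rightarrow> bool" where
  "weakly_k_cross_free k F \<longleftrightarrow>
     \<not> (\<exists>S. S \<subseteq> F \<and> card S = k \<and> pairwise weakly_crossing S)"

definition level :: "'a set set \<Rightarrow> nat \<Rightarrow> 'a set set" where
  "level F i = {X \<in> F. 2 ^ i < card X \<and> card X \<le> 2 ^ (i + 1)}"

definition is_chain :: "'a set set \<Rightarrow> bool" where
  "is_chain C \<longleftrightarrow> (\<forall>X\<in>C. \<forall>Z\<in>C. X \<subseteq> Z \<or> Z \<subseteq> X)"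

definition is_antichain :: "'a set set \<Rightarrow> bool" where
  "is_antichain A \<longleftrightarrow> (\<forall>X\<in>A. \<forall>Z\<in>A. X \<subseteq> Z \<longrightarrow> X = Z)"

definition chain_max :: "'a set set \<Rightarrow> 'a set" where
  "chain_max C = (THE X. X \<in> C \<and> (\<forall>Z\<in>C. Z \<subseteq> X))"

definition smallest_containing :: "'a set set \<Rightarrow> 'a \<Rightarrow> 'a set" where
  "smallest_containing C y = (THE X. X \<in> C \<and> y \<in> X \<and> (\<forall>Z\<in>C. y \<in> Z \<longrightarrow> X \<subseteq> Z))"

definition is_Y :: "'a set set \<Rightarrow> 'a set \<Rightarrow> bool" where
  "is_Y C Y \<longleftrightarrow> (\<exists>Cs ys. set Cs = C \<and> sorted_wrt (\<subset>) Cs \<and> length ys = length Cs \<and>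
      Y = set ys \<and> (Cs \<noteq> [] \<longrightarrow> ys ! 0 \<in> Cs ! 0) \<and>
      (\<forall>j. j + 1 < length Cs \<longrightarrow> ys ! (j + 1) \<in> Cs ! (j + 1) - Cs ! j))"

definition Gamma_ab :: "(nat \<Rightarrow> 'a set set set) \<Rightarrow> real \<Rightarrow> real \<Rightarrow> 'a set set set" where
  "Gamma_ab \<Gamma> a b = (\<Union>i\<in>{i. a < real i \<and> real i \<le> b}. \<Gamma> i)"

definition good_tuple ::
  "nat \<Rightarrow> (nat \<Rightarrow> 'a set set set) \<Rightarrow> real \<Rightarrow> real \<Rightarrow> ('a set set \<Rightarrow> 'a set) \<Rightarrow> 'a
     \<Rightarrow> 'a set set list \<Rightarrow> bool" where
  "good_tuple k \<Gamma> a b Y y Cs \<longleftrightarrow> length Cs = k \<and>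
     (\<exists>j :: nat \<Rightarrow> nat. (\<forall>l<k. a < real (j l) \<and> real (j l) \<le> b \<and> Cs ! l \<in> \<Gamma> (j l)) \<and>
        (\<forall>l. l + 1 < k \<longrightarrow> j l < j (l + 1))) \<and>
     (\<forall>l<k. y \<in> Y (Cs ! l)) \<and>
     (\<forall>l. l + 1 < k \<longrightarrow> smallest_containing (Cs ! l) y \<subseteq> smallest_containing (Cs ! (l + 1)) y)"

definition ext_binom :: "real \<Rightarrow> nat \<Rightarrow> real" where
  "ext_binom x k = (if x \<ge> real k - 1 then (\<Prod>i<k. (x - real i)) / fact k else 0)"

end

theory Submission imports Defs begin

lemma sorted_wrt_nths: "sorted_wrt P xs \<Longrightarrow> sorted_wrt P (nths xs I)"
proof (induction xs arbitrary: I)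
  case Nil then show ?case by simp
next
  case (Cons x xs)
  then show ?case
    using set_nths_subset[of xs "{j. Suc j \<in> I}"]
    by (auto simp: nths_Cons sorted_wrt_append)
qed

lemma chain_max_prop:
  assumes "finite C" "C \<noteq> {}" "is_chain C" "\<forall>X\<in>C. finite X"
  shows "chain_max C \<in> C \<and> (\<forall>Z\<in>C. Z \<subseteq> chain_max C)"
proof -
  have "Max (card ` C) \<in> card ` C" using assms by (intro Max_in) auto
  then obtain X where X: "X \<in> C" "card X = Max (card ` C)" by auto
  have up: "\<forall>Z\<in>C. Z \<subseteq> X"
  proof
    fix Z assume Z: "Z \<in> C"
    have "card Z \<le> card X" using X Z assms(1) by simp
    moreover have "Z \<subseteq> X \<or> X \<subseteq> Z" using assms(3) X Z unfolding is_chain_def by blast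
    moreover have "finite Z" using assms(4) Z by blast
    ultimately show "Z \<subseteq> X"
    proof (elim disjE)
      assume "X \<subseteq> Z" "card Z \<le> card X" "finite Z"
      then have "card X = card Z" using card_mono[of Z X] by simp
      then show "Z \<subseteq> X" using card_subset_eq[of Z X] \<open>X \<subseteq> Z\<close> \<open>finite Z\<close> by simp
    qed
  qed
  have "chain_max C = X"
    unfolding chain_max_def
    by (rule the1_equality) (use X up in auto)
  then show ?thesis using X up by simp
qed

lemma smallest_prop:
  assumes "finite C" "y \<in> \<Union>C" "is_chain C" "\<forall>X\<in>C. finite X"
  shows "smallest_containing C y \<in> C \<and> y \<in> smallest_containing C y \<and>
         (\<forall>Z\<in>C. y \<in> Z \<longrightarrow> smallest_containing C y \<subseteq> Z)"
proof -
  let ?D = "{X\<in>C. y \<in> X}"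
  have fD: "finite ?D" "?D \<noteq> {}" using assms by auto
  have "Min (card ` ?D) \<in> card ` ?D" using fD by (intro Min_in) auto
  then obtain X where X: "X \<in> ?D" "card X = Min (card ` ?D)" by auto
  have dn: "\<forall>Z\<in>C. y \<in> Z \<longrightarrow> X \<subseteq> Z"
  proof (intro ballI impI)
    fix Z assume Z: "Z \<in> C" "y \<in> Z"
    have "card X \<le> card Z" using X Z fD by simp
    moreover have "Z \<subseteq> X \<or> X \<subseteq> Z" using assms(3) X Z unfolding is_chain_def by blast
    moreover have "finite Z" using assms(4) Z by blast
    ultimately show "X \<subseteq> Z"
    proof (elim disjE)
      assume "Z \<subseteq> X" "card X \<le> card Z" "finite Z"
      have "finite X" using assms(4) X by blast
      then have "card Z = card X" using card_mono[of X Z] \<open>Z \<subseteq> X\<close> \<open>card X \<le> card Z\<close> by simp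
      then show "X \<subseteq> Z" using card_subset_eq[of X Z] \<open>Z \<subseteq> X\<close> \<open>finite X\<close> by simp
    qed
  qed
  have "smallest_containing C y = X"
    unfolding smallest_containing_def
    by (rule the1_equality) (use X dn in auto)
  then show ?thesis using X dn by simp
qed

lemma cross_free_card:
  assumes "weakly_k_cross_free k F" "R \<subseteq> F" "pairwise weakly_crossing R"
  shows "card R < k"
proof (rule ccontr)
  assume "\<not> card R < k"
  then obtain T where "T \<subseteq> R" "card T = k" using obtain_subset_with_card_n[of k R] by auto
  then show False using assms pairwise_subset[of weakly_crossing R T]
    unfolding weakly_k_cross_free_def by blast
qed

lemma level_unique:
  assumes "2 ^ i < (c::nat)" "c \<le> 2 ^ (i+1)" "2 ^ j < c" "c \<le> 2 ^ (j+1)"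
  shows "i = j"
proof (rule ccontr)
  assume "i \<noteq> j"
  then have "i + 1 \<le> j \<or> j + 1 \<le> i" by auto
  then show False
  proof
    assume "i + 1 \<le> j"
    then have "(2::nat) ^ (i+1) \<le> 2 ^ j" by (rule power_increasing) simp
    then show False using assms by linarith
  next
    assume "j + 1 \<le> i"
    then have "(2::nat) ^ (j+1) \<le> 2 ^ i" by (rule power_increasing) simp
    then show False using assms by linarith
  qed
qed

lemma ext_binom_le:
  assumes "x \<le> real m"
  shows "ext_binom x k \<le> real (m choose k)"
proof (cases "x \<ge> real k - 1")
  case False then show ?thesis by (simp add: ext_binom_def)
next
  case True
  have "(\<Prod>i<k. (x - real i)) \<le> (\<Prod>i<k. (real m - real i))"
    by (rule prod_mono) (use True assms in auto)
  moreover have "real (m choose k) = (\<Prod>i<k. (real m - real i)) / fact k"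
    by (simp add: binomial_gbinomial gbinomial_prod_rev atLeast0LessThan)
  ultimately show ?thesis using True by (simp add: ext_binom_def divide_right_mono)
qed

lemma long_chain:
  fixes f :: "'a \<Rightarrow> nat"
  assumes "finite S"
    and tr: "\<And>x z w. r x z \<Longrightarrow> r z w \<Longrightarrow> r x w"
    and fr: "\<And>x z. r x z \<Longrightarrow> f x < f z"
    and anti: "\<And>A. A \<subseteq> S \<Longrightarrow> (\<forall>x\<in>A. \<forall>z\<in>A. \<not> r x z) \<Longrightarrow> card A \<le> K"
  shows "\<exists>L. set L \<subseteq> S \<and> sorted_wrt r L \<and> distinct L \<and> card S \<le> length L * K"
proof -
  have "\<And>U. U \<subseteq> S \<Longrightarrow> \<exists>L. set L \<subseteq> U \<and> sorted_wrt r L \<and> distinct L \<and> card U \<le> length L * K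
          \<and> (U \<noteq> {} \<longrightarrow> L \<noteq> [])"
  proof -
    fix U show "U \<subseteq> S \<Longrightarrow> ?thesis U"
    proof (induction "card U" arbitrary: U rule: less_induct)
      case less
      have fU: "finite U" using less.prems assms(1) finite_subset by blast
      show ?case
      proof (cases "U = {}")
        case True then show ?thesis by (intro exI[of _ "[]"]) auto
      next
        case False
        define T where "T = {x\<in>U. \<not> (\<exists>w\<in>U. r w x)}"
        have TU: "T \<subseteq> U" unfolding T_def by auto
        have minex: "\<exists>z\<in>T. r z h" if h: "h \<in> U" "\<exists>w\<in>U. r w h" for h
        proof -
          let ?W = "{w\<in>U. r w h}"
          have "finite ?W" "?W \<noteq> {}" using fU h by auto
          then have "Min (f ` ?W) \<in> f ` ?W" by (intro Min_in) auto
          then obtain z where z: "z \<in> ?W" "f z = Min (f ` ?W)" by auto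
          have "z \<in> T"
          proof -
            have "\<not> r w z" if "w \<in> U" for w
            proof
              assume "r w z"
              then have "r w h" "f w < f z" using tr fr z by blast+
              then have "w \<in> ?W" "f z \<le> f w" using z that \<open>finite ?W\<close> by auto
              then show False using \<open>f w < f z\<close> by simp
            qed
            then show ?thesis using z unfolding T_def by auto
          qed
          then show ?thesis using z by auto
        qed
        have Tne: "T \<noteq> {}"
        proof -
          obtain u where "u \<in> U" using False by auto
          show ?thesis
          proof (cases "\<exists>w\<in>U. r w u")
            case True then show ?thesis using minex \<open>u\<in>U\<close> by auto
          next
            case False then show ?thesis using \<open>u\<in>U\<close> unfolding T_def by auto
          qed
        qed
        have cT: "card T \<le> K"
          by (rule anti) (use TU less.prems in \<open>auto simp: T_def\<close>)
        have "U - T \<subset> U" using Tne TU by blast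
        then have lt: "card (U - T) < card U" using fU by (intro psubset_card_mono) auto
        obtain L' where L': "set L' \<subseteq> U - T" "sorted_wrt r L'" "distinct L'"
            "card (U - T) \<le> length L' * K" "U - T \<noteq> {} \<longrightarrow> L' \<noteq> []"
          using less.hyps[OF lt] less.prems by blast
        have cU: "card U = card T + card (U - T)"
          using card_Diff_subset[of T U] card_mono[OF fU TU] finite_subset[OF TU fU] TU by simp
        show ?thesis
        proof (cases "L' = []")
          case True
          then have "U - T = {}" using L' by auto
          then have "U = T" using TU by auto
          obtain t where "t \<in> T" using Tne by auto
          then show ?thesis using \<open>U = T\<close> cT TU by (intro exI[of _ "[t]"]) auto
        next
          case Lne: False
          obtain h tl where htl: "L' = h # tl" using Lne by (cases L') auto
          have hU: "h \<in> U - T" using L' htl by auto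
          then have "\<exists>w\<in>U. r w h" unfolding T_def by auto
          then obtain z where z: "z \<in> T" "r z h" using minex hU by auto
          have "\<forall>x\<in>set L'. r z x"
          proof
            fix x assume "x \<in> set L'"
            then have "x = h \<or> r h x" using L'(2) htl by auto
            then show "r z x" using z tr by auto
          qed
          moreover have "z \<notin> set L'" using L'(1) z by auto
          ultimately show ?thesis using L' z TU cU cT
            by (intro exI[of _ "z # L'"]) (auto simp: algebra_simps)
        qed
      qed
    qed
  qed
  then show ?thesis by fastforce
qed


lemma nth_in_nths: "distinct xs \<Longrightarrow> i < length xs \<Longrightarrow> (xs!i \<in> set (nths xs I)) = (i \<in> I)"
  by (auto simp: set_nths nth_eq_iff_index_eq)

theorem claim3:
  fixes n k :: nat and F :: "nat set set" and a b :: real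
    and \<Gamma> :: "nat \<Rightarrow> nat set set set" and Y :: "nat set set \<Rightarrow> nat set" and y :: nat
  assumes "k \<ge> 2"
    and "F \<subseteq> Pow {1..n}"
    and "weakly_k_cross_free k F"
    and "0 \<le> a" and "a \<le> b" and "b \<le> log 2 (real n)"
    and "\<And>i. a < real i \<Longrightarrow> real i \<le> b \<Longrightarrow>
           (\<forall>C\<in>\<Gamma> i. is_chain C \<and> C \<noteq> {} \<and> C \<subseteq> level F i) \<and>
           (\<forall>C\<in>\<Gamma> i. \<forall>C'\<in>\<Gamma> i. C \<noteq> C' \<longrightarrow> C \<inter> C' = {}) \<and>
           is_antichain (chain_max ` \<Gamma> i)"
    and "\<And>C. C \<in> Gamma_ab \<Gamma> a b \<Longrightarrow> is_Y C (Y C)"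
    and "y \<in> {1..n}"
  shows "real (card {Cs. good_tuple k \<Gamma> a b Y y Cs})
           \<ge> ext_binom (real (card {C \<in> Gamma_ab \<Gamma> a b. y \<in> Y C}) / (real k - 1) ^ 2) k"
proof -
  define G where "G = Gamma_ab \<Gamma> a b"
  define S where "S = {C \<in> G. y \<in> Y C}"
  define lv where "lv C = (SOME i. a < real i \<and> real i \<le> b \<and> C \<in> \<Gamma> i)" for C
  define s where "s C = smallest_containing C y" for C
  define r where "r C C' \<longleftrightarrow> s C \<subseteq> s C' \<and> lv C < lv C'" for C C'
  have finF: "finite F" using assms(2) by (meson finite_Pow_iff finite_atLeastAtMost finite_subset)
  have finX: "finite X" if "X \<in> F" for X
    using assms(2) that by (meson PowD finite_atLeastAtMost finite_subset subsetD)
  have levF: "level F i \<subseteq> F" for i by (auto simp: level_def)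
  have G_iff: "C \<in> G \<longleftrightarrow> (\<exists>i. a < real i \<and> real i \<le> b \<and> C \<in> \<Gamma> i)" for C
    unfolding G_def Gamma_ab_def by auto
  have lvG: "a < real (lv C) \<and> real (lv C) \<le> b \<and> C \<in> \<Gamma> (lv C)" if "C \<in> G" for C
    unfolding lv_def using someI_ex[OF G_iff[THEN iffD1, OF that]] .
  have props: "is_chain C \<and> C \<noteq> {} \<and> C \<subseteq> level F (lv C)" if "C \<in> G" for C
    using assms(7)[of "lv C"] lvG[OF that] by blast
  have CF: "C \<subseteq> F" if "C \<in> G" for C using props[OF that] levF by blast
  have finC: "finite C" if "C \<in> G" for C using CF[OF that] finF finite_subset by blast
  have finG: "finite G"
  proof -
    have "G \<subseteq> Pow F" using CF by blast
    then show ?thesis using finF by (meson finite_Pow_iff finite_subset)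
  qed
  have finS: "finite S" using finG unfolding S_def by simp
  have memC: "X \<in> F \<and> 2 ^ lv C < card X \<and> card X \<le> 2 ^ (lv C + 1)" if "C \<in> G" "X \<in> C" for C X
    using props[OF that(1)] that(2) unfolding level_def by auto
  have finXC: "\<forall>X\<in>C. finite X" if "C \<in> G" for C using memC[OF that] finX by blast
  have yU: "y \<in> \<Union>C" if "C \<in> S" for C
  proof -
    have CG: "C \<in> G" "y \<in> Y C" using that S_def by auto
    have "is_Y C (Y C)" using assms(8)[of C] CG(1) G_def by simp
    then obtain Cs ys where H: "set Cs = C" "length ys = length Cs" "Y C = set ys"
        "Cs \<noteq> [] \<longrightarrow> ys!0 \<in> Cs!0" "\<forall>j. j+1 < length Cs \<longrightarrow> ys!(j+1) \<in> Cs!(j+1) - Cs!j"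
      unfolding is_Y_def by blast
    from CG(2) H(3) obtain j where j: "j < length ys" "ys!j = y" by (auto simp: in_set_conv_nth)
    have "ys!j \<in> Cs!j" using H j by (cases j) auto
    moreover have "Cs!j \<in> C" using H(1,2) j by auto
    ultimately show ?thesis using j by auto
  qed
  have SG: "S \<subseteq> G" unfolding S_def by auto
  have sprop: "s C \<in> C \<and> y \<in> s C \<and> (\<forall>Z\<in>C. y \<in> Z \<longrightarrow> s C \<subseteq> Z)" if "C \<in> S" for C
    unfolding s_def using smallest_prop[OF finC yU[OF that] _ finXC] props that SG by blast
  have maxprop: "chain_max C \<in> C \<and> (\<forall>Z\<in>C. Z \<subseteq> chain_max C)" if "C \<in> G" for C
    using chain_max_prop[OF finC[OF that] _ _ finXC[OF that]] props[OF that] by blast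
  have perlev: "card {C\<in>S. lv C = i} < k" for i
  proof -
    let ?B = "{C\<in>S. lv C = i}"
    let ?M = "chain_max ` ?B"
    have rng: "a < real i \<and> real i \<le> b \<and> C \<in> \<Gamma> i \<and> C \<in> G" if "C \<in> ?B" for C
      using lvG[of C] that SG by auto
    have inj: "inj_on chain_max ?B"
    proof (rule inj_onI)
      fix C C' assume A: "C \<in> ?B" "C' \<in> ?B" "chain_max C = chain_max C'"
      have "chain_max C \<in> C" "chain_max C' \<in> C'" using maxprop rng[OF A(1)] rng[OF A(2)] by blast+
      then have "chain_max C \<in> C \<inter> C'" using A(3) by simp
      then show "C = C'" using assms(7)[of i] rng[OF A(1)] rng[OF A(2)] by blast
    qed
    have "pairwise weakly_crossing ?M"
      unfolding pairwise_def
    proof (intro ballI impI)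
      fix M M' assume A: "M \<in> ?M" "M' \<in> ?M" "M \<noteq> M'"
      then obtain C C' where C: "C \<in> ?B" "C' \<in> ?B" "M = chain_max C" "M' = chain_max C'" by blast
      have y1: "y \<in> M" using C sprop[of C] maxprop[of C] rng[OF C(1)] by blast
      have y2: "y \<in> M'" using C sprop[of C'] maxprop[of C'] rng[OF C(2)] by blast
      have ac: "is_antichain (chain_max ` \<Gamma> i)" using assms(7)[of i] rng[OF C(1)] by blast
      have "M \<in> chain_max ` \<Gamma> i" "M' \<in> chain_max ` \<Gamma> i" using C rng[OF C(1)] rng[OF C(2)] by blast+
      then have "\<not> M \<subseteq> M'" "\<not> M' \<subseteq> M" using A(3) ac unfolding is_antichain_def by blast+
      then show "weakly_crossing M M'" using y1 y2 unfolding weakly_crossing_def by blast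
    qed
    moreover have "?M \<subseteq> F"
    proof
      fix M assume "M \<in> ?M"
      then obtain C where C: "C \<in> ?B" "M = chain_max C" by blast
      then show "M \<in> F" using maxprop[of C] CF[of C] rng[OF C(1)] by blast
    qed
    ultimately have "card ?M < k" using cross_free_card[OF assms(3)] by blast
    then show ?thesis using card_image[OF inj] by simp
  qed
  have anti: "card A \<le> (k-1)*(k-1)" if AS: "A \<subseteq> S" and AR: "\<forall>x\<in>A. \<forall>z\<in>A. \<not> r x z" for A
  proof -
    have finA: "finite A" using AS finS finite_subset by blast
    have "A = (\<Union>i\<in>lv`A. {C\<in>A. lv C = i})" by auto
    then have "card A \<le> (\<Sum>i\<in>lv`A. card {C\<in>A. lv C = i})"
      using card_UN_le[of "lv`A" "\<lambda>i. {C\<in>A. lv C = i}"] finA by simp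
    also have "\<dots> \<le> (\<Sum>i\<in>lv`A. k-1)"
    proof (rule sum_mono)
      fix i
      have "card {C\<in>A. lv C = i} \<le> card {C\<in>S. lv C = i}"
        by (rule card_mono) (use finS AS in auto)
      then show "card {C\<in>A. lv C = i} \<le> k - 1" using perlev[of i] by simp
    qed
    also have "\<dots> = card (lv`A) * (k-1)" by simp
    also have "card (lv`A) \<le> k - 1"
    proof -
      define g where "g i = (SOME C. C \<in> A \<and> lv C = i)" for i
      have g: "g i \<in> A \<and> lv (g i) = i" if "i \<in> lv`A" for i
        unfolding g_def using that by (metis (mono_tags, lifting) imageE someI)
      have gS: "g i \<in> S" "g i \<in> G" if "i \<in> lv`A" for i using g[OF that] AS SG by auto
      have card_s: "2 ^ i < card (s (g i)) \<and> card (s (g i)) \<le> 2 ^ (i + 1) \<and> s (g i) \<in> F \<and> y \<in> s (g i)"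
        if "i \<in> lv`A" for i
        using memC[OF gS(2)[OF that], of "s (g i)"] sprop[OF gS(1)[OF that]] g[OF that] by auto
      have inj: "inj_on (\<lambda>i. s (g i)) (lv`A)"
      proof (rule inj_onI)
        fix i j assume "i \<in> lv`A" "j \<in> lv`A" "s (g i) = s (g j)"
        then show "i = j" using card_s level_unique by metis
      qed
      have nsub: "\<not> s (g i) \<subseteq> s (g j)" if ij: "i \<in> lv`A" "j \<in> lv`A" "i \<noteq> j" for i j
      proof
        assume sub: "s (g i) \<subseteq> s (g j)"
        show False
        proof (cases "i < j")
          case True
          then have "r (g i) (g j)" using sub g ij unfolding r_def by simp
          then show False using AR g ij by blast
        next
          case False
          then have "j + 1 \<le> i" using ij by simp
          then have "(2::nat) ^ (j+1) \<le> 2 ^ i" by (rule power_increasing) simp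
          moreover have "card (s (g i)) \<le> card (s (g j))"
            using sub finX card_s[OF ij(2)] card_mono by blast
          ultimately show False using card_s[OF ij(1)] card_s[OF ij(2)] by linarith
        qed
      qed
      let ?R = "(\<lambda>i. s (g i)) ` (lv`A)"
      have "pairwise weakly_crossing ?R"
        unfolding pairwise_def weakly_crossing_def
      proof (intro ballI impI)
        fix P Q assume A: "P \<in> ?R" "Q \<in> ?R" "P \<noteq> Q"
        then obtain i j where ij: "i \<in> lv`A" "j \<in> lv`A" "P = s (g i)" "Q = s (g j)" by blast
        then have "i \<noteq> j" using A by blast
        then show "P - Q \<noteq> {} \<and> Q - P \<noteq> {} \<and> P \<inter> Q \<noteq> {}"
          using nsub[OF ij(1,2)] nsub[OF ij(2,1)] card_s[OF ij(1)] card_s[OF ij(2)] ij by blast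
      qed
      moreover have "?R \<subseteq> F" using card_s by blast
      ultimately have "card ?R < k" using cross_free_card[OF assms(3)] by blast
      then show ?thesis using card_image[OF inj] by simp
    qed
    then have "card (lv`A) * (k-1) \<le> (k-1)*(k-1)" by (rule mult_le_mono1)
    finally show ?thesis .
  qed
  obtain L where L: "set L \<subseteq> S" "sorted_wrt r L" "distinct L" "card S \<le> length L * ((k-1)*(k-1))"
    using long_chain[of S r lv "(k-1)*(k-1)"] finS anti unfolding r_def by fastforce
  define m where "m = length L"
  define Is where "Is = {I. I \<subseteq> {..<m} \<and> card I = k}"
  define GT where "GT = {Cs. good_tuple k \<Gamma> a b Y y Cs}"
  have cIs: "card Is = m choose k" unfolding Is_def using n_subsets[of "{..<m}" k] by simp
  have injn: "inj_on (nths L) Is"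
  proof (rule inj_onI)
    fix I J assume IJ: "I \<in> Is" "J \<in> Is" "nths L I = nths L J"
    show "I = J"
    proof (rule set_eqI)
      fix i
      show "i \<in> I \<longleftrightarrow> i \<in> J"
      proof (cases "i < m")
        case True
        then show ?thesis using nth_in_nths[OF L(3), of i I] nth_in_nths[OF L(3), of i J] IJ(3) m_def by simp
      next
        case False
        then show ?thesis using IJ(1,2) unfolding Is_def by auto
      qed
    qed
  qed
  have imgGT: "nths L ` Is \<subseteq> GT"
  proof
    fix Cs assume "Cs \<in> nths L ` Is"
    then obtain I where I: "I \<in> Is" "Cs = nths L I" by blast
    have "{i. i < length L \<and> i \<in> I} = I" using I(1) unfolding Is_def m_def by auto
    then have len: "length Cs = k" using I length_nths[of L I] unfolding Is_def by simp
    have sr: "sorted_wrt r Cs" using sorted_wrt_nths[OF L(2)] I(2) by simp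
    have setS: "set Cs \<subseteq> S" using set_nths_subset[of L I] L(1) I(2) by auto
    have inS: "Cs ! l \<in> S" if "l < k" for l using setS nth_mem[of l Cs] len that by auto
    have inG: "a < real (lv (Cs!l)) \<and> real (lv (Cs!l)) \<le> b \<and> Cs!l \<in> \<Gamma> (lv (Cs!l))" if "l < k" for l
      using lvG[of "Cs!l"] inS[OF that] SG by auto
    have rr: "r (Cs!l) (Cs!(l+1))" if "l + 1 < k" for l
      using sr len that unfolding sorted_wrt_iff_nth_less by simp
    show "Cs \<in> GT" unfolding GT_def good_tuple_def mem_Collect_eq
    proof (intro conjI allI impI)
      show "length Cs = k" by (rule len)
      show "\<exists>j. (\<forall>l<k. a < real (j l) \<and> real (j l) \<le> b \<and> Cs ! l \<in> \<Gamma> (j l)) \<and>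
               (\<forall>l. l + 1 < k \<longrightarrow> j l < j (l + 1))"
        by (rule exI[of _ "\<lambda>l. lv (Cs!l)"]) (use inG rr in \<open>auto simp: r_def\<close>)
      show "y \<in> Y (Cs ! l)" if "l < k" for l using inS[OF that] S_def by simp
      show "smallest_containing (Cs ! l) y \<subseteq> smallest_containing (Cs ! (l + 1)) y"
        if "l + 1 < k" for l using rr[OF that] unfolding r_def s_def by simp
    qed
  qed
  have finGT: "finite GT"
  proof (rule finite_subset[OF _ finite_lists_length_eq[OF finG, of k]])
    show "GT \<subseteq> {xs. set xs \<subseteq> G \<and> length xs = k}"
    proof
      fix Cs assume "Cs \<in> GT"
      then have gt: "good_tuple k \<Gamma> a b Y y Cs" unfolding GT_def by simp
      then have "\<forall>l<k. Cs!l \<in> G" unfolding good_tuple_def using G_iff by blast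
      then show "Cs \<in> {xs. set xs \<subseteq> G \<and> length xs = k}"
        using gt unfolding good_tuple_def by (auto simp: in_set_conv_nth)
    qed
  qed
  have "m choose k \<le> card GT"
    using card_mono[OF finGT imgGT] card_image[OF injn] cIs by simp
  moreover
  have kpos: "(real k - 1) ^ 2 = real ((k-1)*(k-1))" "real ((k-1)*(k-1)) > 0"
    using assms(1) by (auto simp: power2_eq_square of_nat_diff)
  have "real (card S) \<le> real m * real ((k-1)*(k-1))" using L(4) m_def
    by (metis of_nat_le_iff of_nat_mult)
  then have c1: "real (card S) \<le> real m * (real k - 1) ^ 2" using kpos(1) by simp
  have c2: "(real k - 1) ^ 2 > 0" using assms(1) by simp
  have "real (card S) / (real k - 1) ^ 2 \<le> real m"
    using c1 c2 by (simp add: pos_divide_le_eq)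
  then have "ext_binom (real (card S) / (real k - 1) ^ 2) k \<le> real (m choose k)"
    by (rule ext_binom_le)
  moreover have "S = {C \<in> Gamma_ab \<Gamma> a b. y \<in> Y C}" unfolding S_def G_def by simp
  ultimately show ?thesis unfolding GT_def by (metis (no_types, lifting) of_nat_le_iff order_trans)
qed

end
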